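(* For each $n\geq1$ the map $\tilde T_n$ is Markov. For $n=1$ a Markov partition is $\{(0,\kappa_1),(\kappa_1,\tfrac12),(\tfrac12,1-\kappa_1),(1-\kappa_1,1)\}$, and for $n\geq2$ a Markov partition consists of the intervals $(0,\kappa_n)$, $(\kappa_n,\tfrac12-\tfrac{\kappa_n}{2(1+\kappa_n)})$, $(\tfrac12-\tfrac{\kappa_n}{2(1+\kappa_n)},\tfrac12)$, $(\tfrac12,\tfrac12+\tfrac{\kappa_n}{2(1+\kappa_n)})$; $(\tilde T_n^{i+1}(\kappa_n),\tilde T_n^i(\kappa_n))$ for $1\le i\le n-2$; and $(\tilde T_n(\kappa_n),1)$. In all cases the Markov partition has $n+3$ intervals.
   Context: For $\kappa\in(0,1/2)$, the paired tent map $T_\kappa:[-1,1]\to[-1,1]$ is $T_\kappa(x)=2(1+\kappa)(x+1)-1$ for $x\in[-1,-1/2]$, $T_\kappa(x)=-2(1+\kappa)x-1$ for $x\in[-1/2,0)$, $T_\kappa(0)=0$, $T_\kappa(x)=-2(1+\kappa)x+1$ for $x\in(0,1/2]$, $T_\kappa(x)=2(1+\kappa)(x-1)+1$ for $x\in[1/2,1]$. For $n\geq1$, $\kappa_n$ is the unique solution in $(0,1/2)$ of $(2+2\kappa)^n\kappa=1$, and $\tilde T_n:[0,1]\to[0,1]$ is $\tilde T_n(x)=|T_{\kappa_n}(x)|$. A map $T$ of an interval $I$ is Markov if there is a finite collection $\{R_i\}_{i=1}^r$ of disjoint open intervals (a Markov partition) such that $I\setminus\bigcup_iR_i$ is exactly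 the set of endpoints of the $R_i$, and whenever $R_i\cap T(R_j)\neq\emptyset$, we have $R_i\subset T(R_j)$. *)

theory Defs
  imports Complex_Main
begin

definition paired_tent :: "real \<Rightarrow> real \<Rightarrow> real" where
  "paired_tent \<kappa> x =
     (if x \<le> -1/2 then 2*(1+\<kappa>)*(x+1) - 1
      else if x < 0 then -2*(1+\<kappa>)*x - 1
      else if x = 0 then 0
      else if x \<le> 1/2 then -2*(1+\<kappa>)*x + 1
      else 2*(1+\<kappa>)*(x-1) + 1)"

definition kappa :: "nat \<Rightarrow> real" where
  "kappa n = (THE k. 0 < k \<and> k < 1/2 \<and> (2+2*k)^n * k = 1)"

definition tildeT :: "nat \<Rightarrow> real \<Rightarrow> real" where
  "tildeT n x = \<bar>paired_tent (kappa n) x\<bar>"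

definition markov_partition :: "(real \<Rightarrow> real) \<Rightarrow> real set \<Rightarrow> real set set \<Rightarrow> bool" where
  "markov_partition T I P \<longleftrightarrow>
     finite P \<and>
     (\<forall>R\<in>P. \<exists>a b. a < b \<and> R = {a<..<b}) \<and>
     pairwise disjnt P \<and>
     \<Union>P \<subseteq> I \<and>
     I - \<Union>P = {x. \<exists>a b. a < b \<and> {a<..<b} \<in> P \<and> (x = a \<or> x = b)} \<and>
     (\<forall>Ri\<in>P. \<forall>Rj\<in>P. Ri \<inter> T ` Rj \<noteq> {} \<longrightarrow> Ri \<subseteq> T ` Rj)"

definition is_markov :: "(real \<Rightarrow> real) \<Rightarrow> real set \<Rightarrow> bool" where
  "is_markov T I \<longleftrightarrow> (\<exists>P. markov_partition T I P)"

end

theory Submission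
  imports Defs
begin

lemma ivl_eq:
  fixes a b c d :: real
  assumes "a < b" "c < d" "{a<..<b} = {c<..<d}"
  shows "a = c \<and> b = d"
  using assms cInf_greaterThanLessThan[of a b] cInf_greaterThanLessThan[of c d]
    cSup_greaterThanLessThan[of a b] cSup_greaterThanLessThan[of c d] by metis

lemma img_pos:
  fixes f :: "real \<Rightarrow> real"
  assumes "a < b" "\<alpha> > 0" "\<And>x. a < x \<Longrightarrow> x < b \<Longrightarrow> f x = \<alpha>*x+\<beta>"
    "c = \<alpha>*a+\<beta>" "d = \<alpha>*b+\<beta>"
  shows "f ` {a<..<b} = {c<..<d}"
proof
  show "f ` {a<..<b} \<subseteq> {c<..<d}" using assms by auto
  show "{c<..<d} \<subseteq> f ` {a<..<b}"
  proof
    fix y assume y: "y \<in> {c<..<d}"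
    let ?x = "(y - \<beta>)/\<alpha>"
    have "a < ?x" "?x < b" using y assms by (auto simp: field_simps)
    moreover have "f ?x = y" using assms(3)[OF calculation] assms(2) by simp
    ultimately show "y \<in> f ` {a<..<b}" by (metis greaterThanLessThan_iff image_eqI)
  qed
qed

lemma img_neg:
  fixes f :: "real \<Rightarrow> real"
  assumes "a < b" "\<alpha> < 0" "\<And>x. a < x \<Longrightarrow> x < b \<Longrightarrow> f x = \<alpha>*x+\<beta>"
    "c = \<alpha>*b+\<beta>" "d = \<alpha>*a+\<beta>"
  shows "f ` {a<..<b} = {c<..<d}"
proof
  show "f ` {a<..<b} \<subseteq> {c<..<d}" using assms by (auto simp: mult_strict_left_mono_neg)
  show "{c<..<d} \<subseteq> f ` {a<..<b}"
  proof
    fix y assume y: "y \<in> {c<..<d}"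
    let ?x = "(y - \<beta>)/\<alpha>"
    have "a < ?x" "?x < b" using y assms by (auto simp: field_simps)
    moreover have "f ?x = y" using assms(3)[OF calculation] assms(2) by simp
    ultimately show "y \<in> f ` {a<..<b}" by (metis greaterThanLessThan_iff image_eqI)
  qed
qed

lemma markov_crit:
  fixes T :: "real \<Rightarrow> real"
  assumes "finite P" "\<forall>R\<in>P. \<exists>a b. a < b \<and> R = {a<..<b}" "pairwise disjnt P"
    "\<Union>P \<subseteq> I"
    "I - \<Union>P = {x. \<exists>a b. a < b \<and> {a<..<b} \<in> P \<and> (x = a \<or> x = b)}"
    "\<forall>R\<in>P. \<exists>a b. T ` R = {a<..<b} \<and> a \<in> I - \<Union>P \<and> b \<in> I - \<Union>P"
  shows "markov_partition T I P"
proof -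
  have M: "\<forall>Ri\<in>P. \<forall>Rj\<in>P. Ri \<inter> T ` Rj \<noteq> {} \<longrightarrow> Ri \<subseteq> T ` Rj"
  proof (intro ballI impI)
    fix Ri Rj assume Ri: "Ri \<in> P" and Rj: "Rj \<in> P" and ne: "Ri \<inter> T ` Rj \<noteq> {}"
    from bspec[OF assms(2) Ri] obtain c d where cd: "c < d" "Ri = {c<..<d}" by (elim exE conjE)
    from bspec[OF assms(6) Rj] obtain a b where ab: "T ` Rj = {a<..<b}" "a \<in> I - \<Union>P" "b \<in> I - \<Union>P"
      by (elim exE conjE)
    have na: "a \<notin> Ri" using ab(2) Ri by (auto simp add: Union_iff)
    have nb: "b \<notin> Ri" using ab(3) Ri by (auto simp add: Union_iff)
    from ne obtain x where x: "x \<in> Ri" "x \<in> T ` Rj" by (auto simp del: ex_in_conv)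
    have x2: "c < x" "x < d" "a < x" "x < b" using x cd ab(1) by simp_all
    show "Ri \<subseteq> T ` Rj"
    proof
      fix y assume y: "y \<in> Ri"
      then have y2: "c < y" "y < d" using cd by simp_all
      have "\<not> y \<le> a"
      proof
        assume "y \<le> a"
        then have "a \<in> Ri" using x2 y2 cd by simp
        then show False using na by simp
      qed
      moreover have "\<not> b \<le> y"
      proof
        assume "b \<le> y"
        then have "b \<in> Ri" using x2 y2 cd by simp
        then show False using nb by simp
      qed
      ultimately show "y \<in> T ` Rj" using ab(1) by simp
    qed
  qed
  show ?thesis unfolding markov_partition_def
    by (intro conjI assms(1-5) M)
qed

lemma kappa_props:
  assumes "n \<ge> 1"
  shows "0 < kappa n \<and> kappa n < 1/2 \<and> (2+2*kappa n)^n * kappa n = 1"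
proof -
  define f where "f = (\<lambda>k::real. (2+2*k)^n * k)"
  have mono: "f a < f b" if "0 \<le> a" "a < b" for a b
  proof -
    have "(2+2*a)^n \<le> (2+2*b)^n" using that by (intro power_mono) auto
    moreover have "0 < (2+2*a)^n" using that by simp
    ultimately show ?thesis using that unfolding f_def by (intro mult_le_less_imp_less) auto
  qed
  have c: "continuous_on {0..1/2} f" unfolding f_def by (intro continuous_intros)
  have f0: "f 0 \<le> 1" unfolding f_def by simp
  have three: "(3::real)^1 \<le> 3^n" using assms by (intro power_increasing) auto
  have fh: "f (1/2) = 3^n / 2" unfolding f_def by simp
  have f1: "1 \<le> f (1/2)" using three fh by simp
  have "\<exists>x. 0 \<le> x \<and> x \<le> 1/2 \<and> f x = 1"
    by (rule IVT'[OF f0 f1 _ c]) simp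
  then obtain x where x: "0 \<le> x" "x \<le> 1/2" "f x = 1" by blast
  have "x \<noteq> 0" using x unfolding f_def by auto
  moreover have "x \<noteq> 1/2"
  proof
    assume "x = 1/2"
    then have "f (1/2) = 1" using x(3) by metis
    then have "(3::real)^n / 2 = 1" using fh by simp
    then show False using three by simp
  qed
  ultimately have x2: "0 < x" "x < 1/2" "f x = 1" using x by auto
  have uniq: "y = x" if "0 < y" "y < 1/2" "f y = 1" for y
  proof (rule ccontr)
    assume "y \<noteq> x"
    then consider "y < x" | "x < y" by linarith
    then show False
    proof cases
      case 1 then show False using mono[of y x] that x2 by simp
    next
      case 2 then show False using mono[of x y] that x2 by simp
    qed
  qed
  have "kappa n = x" unfolding kappa_def
  proof (rule the_equality)
    show "0 < x \<and> x < 1/2 \<and> (2+2*x)^n * x = 1" using x2 unfolding f_def by simp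
    show "\<And>y. 0 < y \<and> y < 1/2 \<and> (2+2*y)^n * y = 1 \<Longrightarrow> y = x"
      using uniq unfolding f_def by blast
  qed
  then show ?thesis using x2 unfolding f_def by simp
qed



locale L =
  fixes n :: nat and k :: real
  assumes n2: "n \<ge> 2" and kpos: "0 < k" and keq: "(2+2*k)^n * k = 1"
begin

definition s :: real where "s = 2+2*k"
definition T :: "real \<Rightarrow> real" where "T x = \<bar>paired_tent k x\<bar>"
definition q :: "nat \<Rightarrow> real" where "q i = 1 - s^i * k"

lemma s2: "s > 2" using kpos by (simp add: s_def)
lemma sn: "s^n * k = 1" using keq by (simp add: s_def)

lemma spow_le: "i \<le> n \<Longrightarrow> s^i * k \<le> 1"
proof -
  assume "i \<le> n"
  then have "s^i \<le> s^n" using s2 by (intro power_increasing) auto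
  then show ?thesis using sn kpos by (metis mult_right_mono less_eq_real_def)
qed

lemma q_less_iff: "q i < q j \<longleftrightarrow> j < i"
  using s2 kpos by (simp add: q_def)
lemma q_le_iff: "q i \<le> q j \<longleftrightarrow> j \<le> i"
  using s2 kpos by (simp add: q_def)
lemma qn: "q n = 0" using sn by (simp add: q_def)
lemma qn1: "q (n-1) = 1 - 1/s"
proof -
  have "s * (s^(n-1) * k) = 1" using sn n2
    by (metis mult.assoc power_Suc Suc_diff_1 not_numeral_le_zero neq0_conv)
  then have "s^(n-1)*k = 1/s" using s2 by (simp add: field_simps)
  then show ?thesis by (simp add: q_def)
qed
lemma q1: "q 1 < 1" using s2 kpos by (simp add: q_def)
lemma k_lt: "k < 1/s"
proof -
  have "s^1 * k < s^n * k" using n2 s2 kpos by (intro mult_strict_right_mono power_strict_increasing) auto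
  then show ?thesis using sn s2 by (simp add: field_simps)
qed
lemma s_half: "1/s < 1/2" using s2 by (simp add: field_simps)
lemma k_half: "s/2 - 1 = k" by (simp add: s_def field_simps)

lemma q_range: "1 \<le> i \<Longrightarrow> i \<le> n-1 \<Longrightarrow> 1 - 1/s \<le> q i \<and> q i \<le> q 1"
  using q_le_iff[of "n-1" i] q_le_iff[of i 1] qn1 by auto

lemma T_left: "0 < x \<Longrightarrow> x \<le> 1/2 \<Longrightarrow> T x = \<bar>1 - s*x\<bar>"
  by (simp add: T_def paired_tent_def s_def algebra_simps)
lemma T_right: "1/2 < x \<Longrightarrow> T x = \<bar>s*(x-1)+1\<bar>"
  by (simp add: T_def paired_tent_def s_def algebra_simps)

lemma orbit: "1 \<le> i \<Longrightarrow> i \<le> n \<Longrightarrow> (T ^^ i) k = q i"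
proof (induction i rule: nat_induct_at_least)
  case base
  have "k \<le> 1/2" using k_lt s_half by simp
  then have "T k = \<bar>1 - s*k\<bar>" using kpos T_left by simp
  also have "\<dots> = q 1" using spow_le[of 1] n2 by (simp add: q_def)
  finally show ?case by simp
next
  case (Suc i)
  have le: "s^(Suc i) * k \<le> 1" using Suc spow_le by blast
  have "s^i * k \<le> 1/s" using le s2 by (simp add: field_simps)
  then have "1 - 1/s \<le> q i" by (simp add: q_def)
  then have "1/2 < q i" using s_half by simp
  then have "T (q i) = \<bar>s*(q i-1)+1\<bar>" by (rule T_right)
  also have "\<dots> = q (Suc i)" using le by (simp add: q_def algebra_simps)
  finally show ?case using Suc by simp
qed

end


locale G =
  fixes b :: "nat \<Rightarrow> real" and N :: nat
  assumes inc: "\<And>j. j < N \<Longrightarrow> b j < b (Suc j)" and N1: "N \<ge> 1"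
begin

definition PP :: "real set set" where "PP = (\<lambda>j. {b j<..<b (Suc j)}) ` {..<N}"

lemma smono: "i < j \<Longrightarrow> j \<le> N \<Longrightarrow> b i < b j"
proof (induction j)
  case 0 then show ?case by simp
next
  case (Suc j)
  then show ?case using inc[of j] by (cases "i = j") auto
qed

lemma smono_le: "i \<le> j \<Longrightarrow> j \<le> N \<Longrightarrow> b i \<le> b j"
  using smono by (cases "i = j") (auto simp: less_eq_real_def)

lemma PP_fin: "finite PP" unfolding PP_def by simp

lemma PP_ivl: "\<forall>R\<in>PP. \<exists>a c. a < c \<and> R = {a<..<c}"
  unfolding PP_def using inc by auto

lemma PP_card: "card PP = N"
proof -
  have "inj_on (\<lambda>j. {b j<..<b (Suc j)}) {..<N}"
  proof (rule inj_onI)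
    fix i j assume "i \<in> {..<N}" "j \<in> {..<N}" "{b i<..<b (Suc i)} = {b j<..<b (Suc j)}"
    then have "b i = b j" using ivl_eq[OF inc[of i] inc[of j]] by auto
    show "i = j"
    proof (rule ccontr)
      assume "i \<noteq> j"
      then consider "i < j" | "j < i" by linarith
      then show False using smono[of i j] smono[of j i] \<open>b i = b j\<close> \<open>i \<in> {..<N}\<close> \<open>j \<in> {..<N}\<close>
        by cases auto
    qed
  qed
  then show ?thesis unfolding PP_def by (simp add: card_image)
qed

lemma PP_disj: "pairwise disjnt PP"
proof -
  have "disjnt {b i<..<b (Suc i)} {b j<..<b (Suc j)}" if "i < j" "j < N" for i j
    using smono_le[of "Suc i" j] that by (auto simp: disjnt_def)
  then show ?thesis unfolding PP_def pairwise_def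
  proof (intro ballI impI, elim imageE)
    fix x y i j assume H: "\<And>i j. i < j \<Longrightarrow> j < N \<Longrightarrow> disjnt {b i<..<b (Suc i)} {b j<..<b (Suc j)}"
      and ij: "x \<noteq> y" "x = {b i<..<b (Suc i)}" "i \<in> {..<N}" "y = {b j<..<b (Suc j)}" "j \<in> {..<N}"
    then have "i \<noteq> j" by auto
    then consider "i < j" | "j < i" by linarith
    then show "disjnt x y"
    proof cases
      case 1 then show ?thesis using H[of i j] ij by simp
    next
      case 2 then have "disjnt y x" using H[of j i] ij by simp
      then show ?thesis by (rule disjnt_sym)
    qed
  qed
qed

lemma PP_sub: "\<Union>PP \<subseteq> {b 0..b N}"
proof
  fix x assume "x \<in> \<Union>PP"
  then obtain j where j: "j < N" "b j < x" "x < b (Suc j)" unfolding PP_def by auto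
  have "b 0 \<le> b j" "b (Suc j) \<le> b N" using smono_le[of 0 j] smono_le[of "Suc j" N] j by auto
  then show "x \<in> {b 0..b N}" using j by auto
qed

lemma pts_notin: "j \<le> N \<Longrightarrow> b j \<notin> \<Union>PP"
proof
  assume j: "j \<le> N" "b j \<in> \<Union>PP"
  then obtain i where i: "i < N" "b i < b j" "b j < b (Suc i)" unfolding PP_def by auto
  have "\<not> j \<le> i" using smono_le[of j i] i by auto
  moreover have "\<not> Suc i \<le> j" using smono_le[of "Suc i" j] i j by auto
  ultimately show False by simp
qed

lemma cover_m: "m \<le> N \<Longrightarrow> b 0 \<le> x \<Longrightarrow> x \<le> b m \<Longrightarrow> x \<in> b ` {..m} \<or> (\<exists>j<m. b j < x \<and> x < b (Suc j))"
proof (induction m)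
  case 0 then show ?case by auto
next
  case (Suc m)
  show ?case
  proof (cases "x \<le> b m")
    case True
    then have "x \<in> b ` {..m} \<or> (\<exists>j<m. b j < x \<and> x < b (Suc j))" using Suc by auto
    then show ?thesis by (auto intro: less_SucI)
  next
    case False
    then show ?thesis using Suc.prems by (cases "x = b (Suc m)") auto
  qed
qed

lemma PP_diff: "{b 0..b N} - \<Union>PP = b ` {..N}"
proof
  show "{b 0..b N} - \<Union>PP \<subseteq> b ` {..N}"
  proof
    fix x assume x: "x \<in> {b 0..b N} - \<Union>PP"
    have "\<not> (\<exists>j<N. b j < x \<and> x < b (Suc j))"
    proof
      assume "\<exists>j<N. b j < x \<and> x < b (Suc j)"
      then have "x \<in> \<Union>PP" unfolding PP_def by auto
      then show False using x by blast
    qed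
    then show "x \<in> b ` {..N}" using cover_m[of N x] x by auto
  qed
  show "b ` {..N} \<subseteq> {b 0..b N} - \<Union>PP"
    using pts_notin smono_le by auto
qed

lemma PP_ends: "{x. \<exists>a c. a < c \<and> {a<..<c} \<in> PP \<and> (x = a \<or> x = c)} = b ` {..N}"
proof
  show "{x. \<exists>a c. a < c \<and> {a<..<c} \<in> PP \<and> (x = a \<or> x = c)} \<subseteq> b ` {..N}"
  proof
    fix x assume "x \<in> {x. \<exists>a c. a < c \<and> {a<..<c} \<in> PP \<and> (x = a \<or> x = c)}"
    then obtain a c j where "a < c" "j < N" "{a<..<c} = {b j<..<b (Suc j)}" "x = a \<or> x = c"
      unfolding PP_def by auto
    then have "x = b j \<or> x = b (Suc j)" using ivl_eq[OF \<open>a < c\<close> inc[of j]] by auto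
    then show "x \<in> b ` {..N}" using \<open>j < N\<close> by auto
  qed
  show "b ` {..N} \<subseteq> {x. \<exists>a c. a < c \<and> {a<..<c} \<in> PP \<and> (x = a \<or> x = c)}"
  proof
    fix x assume "x \<in> b ` {..N}"
    then obtain j where j: "j \<le> N" "x = b j" by auto
    show "x \<in> {x. \<exists>a c. a < c \<and> {a<..<c} \<in> PP \<and> (x = a \<or> x = c)}"
    proof (cases "j < N")
      case True
      then show ?thesis using j inc unfolding PP_def by blast
    next
      case False
      then have "j = Suc (N-1)" "N - 1 < N" using j N1 by auto
      then show ?thesis using j inc[of "N-1"] unfolding PP_def by blast
    qed
  qed
qed

lemma PP_markov:
  assumes "b 0 = 0" "b N = 1"
    "\<And>j. j < N \<Longrightarrow> \<exists>c d. T ` {b j<..<b (Suc j)} = {c<..<d} \<and> c \<in> b ` {..N} \<and> d \<in> b ` {..N}"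
  shows "markov_partition T {0..1} PP"
proof (rule markov_crit[OF PP_fin PP_ivl PP_disj])
  show "\<Union>PP \<subseteq> {0..1}" using PP_sub assms(1,2) by simp
  show "{0..1} - \<Union>PP = {x. \<exists>a c. a < c \<and> {a<..<c} \<in> PP \<and> (x = a \<or> x = c)}"
    using PP_diff PP_ends assms(1,2) by simp
  show "\<forall>R\<in>PP. \<exists>a c. T ` R = {a<..<c} \<and> a \<in> {0..1} - \<Union>PP \<and> c \<in> {0..1} - \<Union>PP"
  proof
    fix R assume "R \<in> PP"
    then obtain j where j: "j < N" "R = {b j<..<b (Suc j)}" unfolding PP_def by auto
    show "\<exists>a c. T ` R = {a<..<c} \<and> a \<in> {0..1} - \<Union>PP \<and> c \<in> {0..1} - \<Union>PP"
    proof -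
      obtain c d where cd: "T ` {b j<..<b (Suc j)} = {c<..<d}" "c \<in> b ` {..N}" "d \<in> b ` {..N}"
        using assms(3)[OF j(1)] by blast
      have "{0..1} - \<Union>PP = b ` {..N}" using PP_diff assms(1,2) by simp
      then show ?thesis using cd j(2) by blast
    qed
  qed
qed

end



context L begin

definition bb :: "nat \<Rightarrow> real" where
  "bb j = (if j = 0 then 0 else if j = 1 then k else if j = 2 then 1/s else if j = 3 then 1/2
           else if j < n+3 then q (n+3-j) else 1)"

lemma facts: "0 < k" "k < 1/s" "1/s < 1/2" "1/2 < 1 - 1/s" "q 1 < 1" "s > 2"
  using kpos k_lt s_half q1 s2 by auto

lemma bb_inc: "j < n+3 \<Longrightarrow> bb j < bb (Suc j)"
proof -
  assume j: "j < n+3"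
  consider "j = 0" | "j = 1" | "j = 2" | "j = 3" | "4 \<le> j" "j \<le> n+1" | "j = n+2" using j by linarith
  then show ?thesis
  proof cases
    case 4
    have "bb 4 = 1 - 1/s" using qn1 n2 by (simp add: bb_def)
    moreover have "bb 3 = 1/2" by (simp add: bb_def)
    ultimately have "bb 3 < bb 4" using facts(4) by linarith
    then show ?thesis using 4 by simp
  next
    case 5
    have "q (n+3-j) < q (n+3 - Suc j)" using 5 q_less_iff by simp
    then show ?thesis using 5 by (simp add: bb_def)
  next
    case 6
    then show ?thesis using facts by (simp add: bb_def)
  qed (use facts n2 in \<open>simp_all add: bb_def\<close>)
qed

sublocale G bb "n+3"
proof
  fix j assume "j < n+3" then show "bb j < bb (Suc j)" by (rule bb_inc)
qed (use n2 in simp)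

lemma bb0: "bb 0 = 0" by (simp add: bb_def)
lemma bbN: "bb (n+3) = 1" using n2 by (simp add: bb_def)

lemma q_in: "1 \<le> m \<Longrightarrow> m \<le> n \<Longrightarrow> q m \<in> bb ` {..n+3}"
proof -
  assume m: "1 \<le> m" "m \<le> n"
  show ?thesis
  proof (cases "m = n")
    case True
    then have "q m = bb 0" using qn bb0 by simp
    then show ?thesis by auto
  next
    case False
    then have "n+3-m \<ge> 4" "n+3-m < n+3" using m by auto
    then have "bb (n+3-m) = q m" using m by (simp add: bb_def)
    then show ?thesis using m by (metis atMost_iff diff_le_self image_eqI)
  qed
qed

lemma k_in: "k \<in> bb ` {..n+3}"
proof -
  have "bb 1 = k" by (simp add: bb_def)
  then show ?thesis by (metis atMost_iff image_eqI le_add2 le_add_same_cancel2 one_le_numeral order.trans)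
qed
lemma zero_in: "0 \<in> bb ` {..n+3}" using bb0 by (metis atMost_iff image_eqI le0)
lemma one_in: "1 \<in> bb ` {..n+3}" using bbN by (metis atMost_iff image_eqI order_refl)

lemma qdef_lin: "s * q m + (1 - s) = q (Suc m)" by (simp add: q_def algebra_simps)

lemma images: "j < n+3 \<Longrightarrow> \<exists>c d. T ` {bb j<..<bb (Suc j)} = {c<..<d} \<and> c \<in> bb ` {..n+3} \<and> d \<in> bb ` {..n+3}"
proof -
  assume j: "j < n+3"
  consider "j = 0" | "j = 1" | "j = 2" | "j = 3" | "4 \<le> j" "j \<le> n+1" | "j = n+2" using j by linarith
  then show ?thesis
  proof cases
    case 1
    have "T ` {0<..<k} = {q 1<..<1}"
    proof (rule img_neg[of 0 k "-s" T 1])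
      fix x assume x: "0 < x" "x < k"
      have "s * x < s * k" using x facts by simp
      also have "s * k < 1" using facts by (simp add: field_simps)
      finally have "1 - s*x > 0" by simp
      moreover have "x \<le> 1/2" using x facts by linarith
      ultimately show "T x = -s * x + 1" using T_left x by simp
    qed (use facts in \<open>auto simp: q_def\<close>)
    moreover have e: "bb j = 0" "bb (Suc j) = k" using 1 by (simp_all add: bb_def)
    moreover have "q 1 \<in> bb ` {..n+3}" using q_in[of 1] n2 by simp
    ultimately show ?thesis using one_in by (metis (no_types))
  next
    case 2
    have "T ` {k<..<1/s} = {0<..<q 1}"
    proof (rule img_neg[of k "1/s" "-s" T 1])
      fix x assume x: "k < x" "x < 1/s"
      have "s * x < s * (1/s)" using x facts by (intro mult_strict_left_mono) auto
      moreover have "s * (1/s) = 1" using facts by simp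
      ultimately have "1 - s*x > 0" by linarith
      moreover have "x \<le> 1/2" "0 < x" using x facts by linarith+
      ultimately show "T x = -s * x + 1" using T_left x by simp
    qed (use facts in \<open>auto simp: q_def\<close>)
    moreover have e: "bb j = k" "bb (Suc j) = 1/s" using 2 by (simp_all add: bb_def)
    moreover have "q 1 \<in> bb ` {..n+3}" using q_in[of 1] n2 by simp
    ultimately show ?thesis using zero_in by (metis (no_types))
  next
    case 3
    have "T ` {1/s<..<1/2} = {0<..<k}"
    proof (rule img_pos[of "1/s" "1/2" s T "-1"])
      fix x assume x: "1/s < x" "x < 1/2"
      have "s * (1/s) < s * x" using x facts by (intro mult_strict_left_mono) auto
      moreover have "s * (1/s) = 1" using facts by simp
      ultimately have "1 - s*x < 0" by linarith
      moreover have "x \<le> 1/2" "0 < x" using x facts by linarith+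
      ultimately show "T x = s * x + -1" using T_left x by simp
    qed (use facts k_half in \<open>auto\<close>)
    moreover have e: "bb j = 1/s" "bb (Suc j) = 1/2" using 3 by (simp_all add: bb_def)
    ultimately show ?thesis using zero_in k_in by (metis (no_types))
  next
    case 4
    have "T ` {1/2<..<1 - 1/s} = {0<..<k}"
    proof (rule img_neg[of "1/2" "1 - 1/s" "-s" T "s - 1"])
      fix x assume x: "1/2 < x" "x < 1 - 1/s"
      have "s * x < s * (1 - 1/s)" using x facts by simp
      then have "s*(x-1)+1 < 0" using facts by (simp add: algebra_simps)
      then show "T x = -s * x + (s - 1)" using T_right x by (simp add: algebra_simps)
    next
      show "1/2 < 1 - 1/s" using facts by linarith
      show "-s < 0" using facts by simp
      have "s \<noteq> 0" using facts by simp
      then show "0 = -s * (1 - 1/s) + (s - 1)" by (simp add: algebra_simps)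
      show "k = -s * (1/2) + (s - 1)" using k_half by simp
    qed
    moreover have e: "bb j = 1/2" "bb (Suc j) = 1 - 1/s" using 4 qn1 n2 by (simp_all add: bb_def)
    ultimately show ?thesis using zero_in k_in by (metis (no_types))
  next
    case 5
    define m where "m = n + 2 - j"
    have m: "1 \<le> m" "m \<le> n-2" using 5 n2 by (auto simp: m_def)
    have e1: "n + 3 - j = Suc m" "n + 3 - Suc j = m" using 5 by (auto simp: m_def)
    have bj: "bb j = q (Suc m)" "bb (Suc j) = q m" using 5 e1 by (simp_all add: bb_def)
    have lo: "1 - 1/s \<le> q (Suc m)" using q_le_iff[of "n-1" "Suc m"] qn1 m by simp
    have "T ` {q (Suc m)<..<q m} = {q (Suc (Suc m))<..<q (Suc m)}"
    proof (rule img_pos[of "q (Suc m)" "q m" s T "1 - s"])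
      fix x assume x: "q (Suc m) < x" "x < q m"
      have "1 - 1/s < x" using lo x by simp
      then have "s * (1 - 1/s) < s * x" using facts by (intro mult_strict_left_mono) auto
      then have "s*(x-1)+1 > 0" using facts by (simp add: algebra_simps)
      moreover have "1/2 < x" using \<open>1 - 1/s < x\<close> facts by linarith
      ultimately show "T x = s * x + (1 - s)" using T_right by (simp add: algebra_simps)
    qed (use facts qdef_lin q_less_iff in \<open>auto\<close>)
    moreover have "q (Suc m) \<in> bb ` {..n+3}" "q (Suc (Suc m)) \<in> bb ` {..n+3}"
      using q_in[of "Suc m"] q_in[of "Suc (Suc m)"] m n2 by auto
    ultimately show ?thesis using bj by (metis (no_types))
  next
    case 6
    have bj: "bb j = q 1" "bb (Suc j) = 1" using 6 n2 by (simp_all add: bb_def)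
    have "T ` {q 1<..<1} = {q 2<..<1}"
    proof (rule img_pos[of "q 1" 1 s T "1 - s"])
      fix x assume x: "q 1 < x" "x < 1"
      have lo: "1 - 1/s \<le> q 1" using q_range[of 1] n2 by simp
      then have "1 - 1/s < x" using x by simp
      then have "s * (1 - 1/s) < s * x" using facts by (intro mult_strict_left_mono) auto
      then have "s*(x-1)+1 > 0" using facts by (simp add: algebra_simps)
      moreover have "1/2 < x" using \<open>1 - 1/s < x\<close> facts by linarith
      ultimately show "T x = s * x + (1 - s)" using T_right by (simp add: algebra_simps)
    qed (use facts qdef_lin[of 1] in \<open>auto simp: numeral_2_eq_2\<close>)
    moreover have "q 2 \<in> bb ` {..n+3}" using q_in[of 2] n2 by simp
    ultimately show ?thesis using bj one_in by (metis (no_types))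
  qed
qed

lemma markov_PP: "markov_partition T {0..1} PP"
  by (rule PP_markov[OF bb0 bbN images])

end


context L begin

lemma bb_orb: "4 \<le> j \<Longrightarrow> j \<le> n+1 \<Longrightarrow> bb j = q (n+2-j+1) \<and> bb (Suc j) = q (n+2-j)"
proof -
  assume j: "4 \<le> j" "j \<le> n+1"
  have e1: "n + 3 - j = n+2-j+1" "n + 3 - Suc j = n+2-j" using j by auto
  show ?thesis using j e1 by (simp add: bb_def)
qed

lemma PP_eq: "{{0<..<k}, {k<..<1/s}, {1/s<..<1/2}, {1/2<..<1-1/s}} \<union> {{q(i+1)<..<q i} | i. 1 \<le> i \<and> i \<le> n-2} \<union> {{q 1<..<1}} = PP"
proof -
  let ?f = "\<lambda>j. {bb j<..<bb (Suc j)}"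
  have f0: "?f 0 = {0<..<k}" by (simp add: bb_def)
  have f1: "?f 1 = {k<..<1/s}" by (simp add: bb_def)
  have f2: "?f 2 = {1/s<..<1/2}" by (simp add: bb_def)
  have f3: "?f 3 = {1/2<..<1-1/s}" using qn1 n2 by (simp add: bb_def)
  have fN: "?f (n+2) = {q 1<..<1}" using n2 by (simp add: bb_def)
  have fo: "?f j = {q(n+2-j+1)<..<q (n+2-j)}" if "4 \<le> j" "j \<le> n+1" for j
    using bb_orb[OF that] by simp
  show ?thesis
  proof
    show "{{0<..<k}, {k<..<1/s}, {1/s<..<1/2}, {1/2<..<1-1/s}} \<union> {{q(i+1)<..<q i} | i. 1 \<le> i \<and> i \<le> n-2} \<union> {{q 1<..<1}} \<subseteq> PP"
    proof (intro Un_least insert_subsetI empty_subsetI subsetI)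
      have "?f j \<in> PP" if "j < n+3" for j using that unfolding PP_def by blast
      note fin = this
      show "{0<..<k} \<in> PP" using fin[of 0] f0 by simp
      show "{k<..<1/s} \<in> PP" using fin[of 1] f1 by simp
      show "{1/s<..<1/2} \<in> PP" using fin[of 2] f2 by simp
      show "{1/2<..<1-1/s} \<in> PP" using fin[of 3] f3 n2 by simp
      show "{q 1<..<1} \<in> PP" using fin[of "n+2"] fN by simp
      fix X assume "X \<in> {{q(i+1)<..<q i} | i. 1 \<le> i \<and> i \<le> n-2}"
      then obtain i where i: "X = {q(i+1)<..<q i}" "1 \<le> i" "i \<le> n-2" by blast
      have "n+2-(n+2-i) = i" using i n2 by simp
      then have "?f (n+2-i) = X" using fo[of "n+2-i"] i n2 by simp
      moreover have "n+2-i < n+3" by simp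
      ultimately show "X \<in> PP" using fin by metis
    qed
  next
    show "PP \<subseteq> {{0<..<k}, {k<..<1/s}, {1/s<..<1/2}, {1/2<..<1-1/s}} \<union> {{q(i+1)<..<q i} | i. 1 \<le> i \<and> i \<le> n-2} \<union> {{q 1<..<1}}"
    proof
      fix X assume "X \<in> PP"
      then obtain j where j: "j < n+3" "X = ?f j" unfolding PP_def by blast
      consider "j = 0" | "j = 1" | "j = 2" | "j = 3" | "4 \<le> j" "j \<le> n+1" | "j = n+2" using j by linarith
      then show "X \<in> {{0<..<k}, {k<..<1/s}, {1/s<..<1/2}, {1/2<..<1-1/s}} \<union> {{q(i+1)<..<q i} | i. 1 \<le> i \<and> i \<le> n-2} \<union> {{q 1<..<1}}"
      proof cases
        case 5
        have "X = {q(n+2-j+1)<..<q (n+2-j)}" using fo[OF 5] j by simp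
        moreover have "1 \<le> n+2-j" "n+2-j \<le> n-2" using 5 by auto
        ultimately show ?thesis by blast
      qed (use j f0 f1 f2 f3 fN in auto)
    qed
  qed
qed

end

lemma main2:
  assumes "n \<ge> 2"
  shows "let k = kappa n; c = k / (2*(1+k));
            P = {{0<..<k}, {k<..<1/2 - c}, {1/2 - c<..<1/2}, {1/2<..<1/2 + c}}
                \<union> {{(tildeT n ^^ (i+1)) k<..<(tildeT n ^^ i) k} | i. 1 \<le> i \<and> i \<le> n - 2}
                \<union> {{tildeT n k<..<1}}
        in markov_partition (tildeT n) {0..1} P \<and> card P = n + 3"
proof -
  have kp: "0 < kappa n" "kappa n < 1/2" "(2+2*kappa n)^n * kappa n = 1"
    using kappa_props[of n] assms by auto
  interpret L n "kappa n" using assms kp by unfold_locales auto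
  have TT: "tildeT n = T" by (rule ext) (simp add: tildeT_def T_def)
  have c1: "1/2 - kappa n/(2*(1+kappa n)) = 1/s" using kp by (simp add: s_def field_simps)
  have c2: "1/2 + kappa n/(2*(1+kappa n)) = 1 - 1/s" using kp by (simp add: s_def field_simps)
  have Oeq: "{{(T ^^ (i+1)) (kappa n)<..<(T ^^ i) (kappa n)} | i. 1 \<le> i \<and> i \<le> n - 2}
     = {{q(i+1)<..<q i} | i. 1 \<le> i \<and> i \<le> n-2}"
  proof -
    have "(T ^^ (i+1)) (kappa n) = q (i+1) \<and> (T ^^ i) (kappa n) = q i" if "1 \<le> i" "i \<le> n-2" for i
      using orbit[of i] orbit[of "i+1"] that n2 by simp
    then show ?thesis by (intro Collect_cong ex_cong1) (metis (no_types))
  qed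
  have T1: "T (kappa n) = q 1" using orbit[of 1] n2 by simp
  show ?thesis unfolding Let_def TT c1 c2 Oeq T1 PP_eq using markov_PP PP_card by simp
qed



lemma main1:
  "let k = kappa 1; P = {{0<..<k}, {k<..<1/2}, {1/2<..<1-k}, {1-k<..<1}}
   in markov_partition (tildeT 1) {0..1} P \<and> card P = 1 + 3"
proof -
  define k where "k = kappa 1"
  define s where "s = 2 + 2*k"
  have kp: "0 < k" "k < 1/2" "s * k = 1" using kappa_props[of 1] by (auto simp: k_def s_def)
  have sp: "s > 2" using kp by (simp add: s_def)
  have TL: "tildeT 1 x = \<bar>1 - s*x\<bar>" if "0 < x" "x \<le> 1/2" for x
    using that by (simp add: tildeT_def paired_tent_def k_def s_def algebra_simps)
  have TR: "tildeT 1 x = \<bar>s*(x-1)+1\<bar>" if "1/2 < x" for x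
    using that by (simp add: tildeT_def paired_tent_def k_def s_def algebra_simps)
  define b1 :: "nat \<Rightarrow> real" where
    "b1 j = (if j = 0 then 0 else if j = 1 then k else if j = 2 then 1/2 else if j = 3 then 1 - k else 1)" for j
  have inc: "b1 j < b1 (Suc j)" if "j < 4" for j
  proof -
    have "j = 0 \<or> j = 1 \<or> j = 2 \<or> j = 3" using that by auto
    then show ?thesis using kp by (auto simp: b1_def)
  qed
  interpret g: G b1 4 by unfold_locales (use inc in auto)
  have l4: "{..<4::nat} = {0,1,2,3}" by auto
  have PPe: "g.PP = {{0<..<k}, {k<..<1/2}, {1/2<..<1-k}, {1-k<..<1}}"
    unfolding g.PP_def l4 by (simp add: b1_def)
  have pts: "0 \<in> b1 ` {..4}" "k \<in> b1 ` {..4}" "1 \<in> b1 ` {..4}"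
  proof -
    have "b1 0 = 0" "b1 1 = k" "b1 4 = 1" by (simp_all add: b1_def)
    then show "0 \<in> b1 ` {..4}" "k \<in> b1 ` {..4}" "1 \<in> b1 ` {..4}"
      by (metis atMost_iff image_eqI order_refl le0 one_le_numeral)+
  qed
  have imgs: "\<exists>c d. tildeT 1 ` {b1 j<..<b1 (Suc j)} = {c<..<d} \<and> c \<in> b1 ` {..4} \<and> d \<in> b1 ` {..4}"
    if "j < 4" for j
  proof -
    have "j = 0 \<or> j = 1 \<or> j = 2 \<or> j = 3" using that by auto
    then consider "j = 0" | "j = 1" | "j = 2" | "j = 3" by blast
    then show ?thesis
    proof cases
      case 1
      have e: "b1 j = 0" "b1 (Suc j) = k" using 1 by (simp_all add: b1_def)
      have "tildeT 1 ` {0<..<k} = {0<..<1}"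
      proof (rule img_neg[of 0 k "-s" _ 1])
        fix x assume x: "0 < x" "x < k"
        have "s * x < s * k" using x sp by (intro mult_strict_left_mono) auto
        then have "1 - s*x > 0" using kp by linarith
        moreover have "x \<le> 1/2" using x kp by linarith
        ultimately show "tildeT 1 x = -s * x + 1" using TL x by simp
      qed (use kp sp in auto)
      then show ?thesis unfolding e using pts by blast
    next
      case 2
      have e: "b1 j = k" "b1 (Suc j) = 1/2" using 2 by (simp_all add: b1_def)
      have "tildeT 1 ` {k<..<1/2} = {0<..<k}"
      proof (rule img_pos[of k "1/2" s _ "-1"])
        fix x assume x: "k < x" "x < 1/2"
        have "s * k < s * x" using x sp by (intro mult_strict_left_mono) auto
        then have "1 - s*x < 0" using kp by linarith
        moreover have "x \<le> 1/2" "0 < x" using x kp by linarith+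
        ultimately show "tildeT 1 x = s * x + -1" using TL by simp
      qed (use kp sp in \<open>auto simp: s_def field_simps\<close>)
      then show ?thesis unfolding e using pts by blast
    next
      case 3
      have e: "b1 j = 1/2" "b1 (Suc j) = 1 - k" using 3 by (simp_all add: b1_def)
      have "tildeT 1 ` {1/2<..<1-k} = {0<..<k}"
      proof (rule img_neg[of "1/2" "1-k" "-s" _ "s - 1"])
        fix x assume x: "1/2 < x" "x < 1-k"
        have "s * x < s * (1-k)" using x sp by (intro mult_strict_left_mono) auto
        then have "s*(x-1)+1 < 0" using kp by (simp add: algebra_simps)
        then show "tildeT 1 x = -s * x + (s - 1)" using TR x by (simp add: algebra_simps)
      next
        show "0 = -s * (1 - k) + (s - 1)" using kp by (simp add: algebra_simps)
        show "k = -s * (1/2) + (s - 1)" by (simp add: s_def field_simps)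
      qed (use kp sp in auto)
      then show ?thesis unfolding e using pts by blast
    next
      case 4
      have e: "b1 j = 1 - k" "b1 (Suc j) = 1" using 4 by (simp_all add: b1_def)
      have "tildeT 1 ` {1-k<..<1} = {0<..<1}"
      proof (rule img_pos[of "1-k" 1 s _ "1 - s"])
        fix x assume x: "1-k < x" "x < 1"
        have "s * (1-k) < s * x" using x sp by (intro mult_strict_left_mono) auto
        then have "s*(x-1)+1 > 0" using kp by (simp add: algebra_simps)
        moreover have "1/2 < x" using x kp by linarith
        ultimately show "tildeT 1 x = s * x + (1 - s)" using TR by (simp add: algebra_simps)
      next
        show "0 = s * (1 - k) + (1 - s)" using kp by (simp add: algebra_simps)
      qed (use kp sp in auto)
      then show ?thesis unfolding e using pts by blast
    qed
  qed
  have b0: "b1 0 = 0" and b4: "b1 4 = 1" by (simp_all add: b1_def)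
  have "markov_partition (tildeT 1) {0..1} g.PP"
    by (rule g.PP_markov[OF b0 b4 imgs])
  moreover have "card g.PP = 4" by (rule g.PP_card)
  ultimately show ?thesis unfolding Let_def k_def[symmetric] PPe by simp
qed

theorem lemma15:
  fixes n :: nat
  assumes "n \<ge> 1"
  shows "is_markov (tildeT n) {0..1} \<and>
    (n = 1 \<longrightarrow>
       (let k = kappa 1;
            P = {{0<..<k}, {k<..<1/2}, {1/2<..<1-k}, {1-k<..<1}}
        in markov_partition (tildeT 1) {0..1} P \<and> card P = n + 3)) \<and>
    (n \<ge> 2 \<longrightarrow>
       (let k = kappa n; c = k / (2*(1+k));
            P = {{0<..<k}, {k<..<1/2 - c}, {1/2 - c<..<1/2}, {1/2<..<1/2 + c}}
                \<union> {{(tildeT n ^^ (i+1)) k<..<(tildeT n ^^ i) k} | i. 1 \<le> i \<and> i \<le> n - 2}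
                \<union> {{tildeT n k<..<1}}
        in markov_partition (tildeT n) {0..1} P \<and> card P = n + 3))"
proof (cases "n = 1")
  case True
  have m: "markov_partition (tildeT 1) {0..1} {{0<..<kappa 1}, {kappa 1<..<1/2}, {1/2<..<1-kappa 1}, {1-kappa 1<..<1}}"
    and c: "card {{0<..<kappa 1}, {kappa 1<..<1/2}, {1/2<..<1-kappa 1}, {1-kappa 1<..<1}} = 1 + 3"
    using main1 unfolding Let_def by auto
  have "is_markov (tildeT 1) {0..1}" unfolding is_markov_def using m by blast
  then show ?thesis using True m c unfolding Let_def by simp
next
  case False
  then have n2: "n \<ge> 2" using assms by simp
  have M: "let k = kappa n; c = k / (2*(1+k));
            P = {{0<..<k}, {k<..<1/2 - c}, {1/2 - c<..<1/2}, {1/2<..<1/2 + c}}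
                \<union> {{(tildeT n ^^ (i+1)) k<..<(tildeT n ^^ i) k} | i. 1 \<le> i \<and> i \<le> n - 2}
                \<union> {{tildeT n k<..<1}}
        in markov_partition (tildeT n) {0..1} P \<and> card P = n + 3" by (rule main2[OF n2])
  then have "is_markov (tildeT n) {0..1}" unfolding is_markov_def Let_def by blast
  then show ?thesis using M False n2 by simp
qed


end
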